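(* Let $0<\alpha\le\frac12$ and let $\mu$ be a finite positive Borel measure on $[0,1)$ which is an $\alpha$-Carleson measure. Then $\mathcal{C}_\mu$ is bounded from $H^\infty$ into $\mathcal{B}^{2-\alpha}$; in particular $\mathcal{C}_\mu(H^\infty)\subseteq\mathcal{B}^{2-\alpha}$.
   Context: For a finite positive Borel measure $\mu$ on $[0,1)$, $\mu_n=\int_{[0,1)}t^n\,d\mu(t)$ and $\mathcal{C}_\mu(f)(z)=\sum_{n\ge0}\big(\mu_n\sum_{k=0}^n a_k\big)z^n=\int_{[0,1)}\frac{f(tz)}{1-tz}\,d\mu(t)$ for $f=\sum a_nz^n$ analytic on the unit disc $\mathbb{D}$. For $s>0$, $\mu$ is an $s$-Carleson measure if $\mu([t,1))\le C(1-t)^s$ for all $t\in[0,1)$. $H^\infty$ is the space of bounded analytic functions on $\mathbb{D}$, and for $\beta>0$, $\mathcal{B}^\beta=\{f \text{ analytic on } \mathbb{D}:|f(0)|+\sup_{z\in\mathbb{D}}(1-|z|^2)^\beta|f'(z)|<\infty\}$. *)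

theory Defs
  imports "HOL-Analysis.Analysis"
begin

definition borel_measure_on_01 :: "real measure \<Rightarrow> bool" where
  "borel_measure_on_01 \<mu> \<longleftrightarrow>
     sets \<mu> = sets (restrict_space borel {0..<1}) \<and> finite_measure \<mu>"

definition carleson_measure :: "real \<Rightarrow> real measure \<Rightarrow> bool" where
  "carleson_measure s \<mu> \<longleftrightarrow>
     (\<exists>C. \<forall>t\<in>{0..<1}. measure \<mu> {t..<1} \<le> C * (1 - t) powr s)"

text \<open>The generalized Cesaro operator C_mu, via its integral representation.\<close>
definition cesaro_op :: "real measure \<Rightarrow> (complex \<Rightarrow> complex) \<Rightarrow> complex \<Rightarrow> complex" where
  "cesaro_op \<mu> f z = (LINT t|\<mu>. f (complex_of_real t * z) / (1 - complex_of_real t * z))"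

definition Hinf :: "(complex \<Rightarrow> complex) set" where
  "Hinf = {f. f holomorphic_on ball 0 1 \<and> bounded (f ` ball 0 1)}"

definition Hinf_norm :: "(complex \<Rightarrow> complex) \<Rightarrow> real" where
  "Hinf_norm f = (SUP z\<in>ball 0 1. norm (f z))"

definition Bloch_type :: "real \<Rightarrow> (complex \<Rightarrow> complex) set" where
  "Bloch_type \<beta> = {f. f holomorphic_on ball 0 1 \<and>
      bdd_above ((\<lambda>z. (1 - norm z ^ 2) powr \<beta> * norm (deriv f z)) ` ball 0 1)}"

definition Bloch_type_norm :: "real \<Rightarrow> (complex \<Rightarrow> complex) \<Rightarrow> real" where
  "Bloch_type_norm \<beta> f = norm (f 0) +
      (SUP z\<in>ball 0 1. (1 - norm z ^ 2) powr \<beta> * norm (deriv f z))"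

end

theory Submission
  imports Defs "HOL-Complex_Analysis.Complex_Analysis"
begin


lemma mu_space:
  assumes sets: "sets \<mu> = sets (restrict_space borel {0..<(1::real)})"
  shows "space \<mu> = {0..<1}"
  using sets_eq_imp_space_eq[OF sets] by simp

lemma mu_id_meas:
  assumes sets: "sets \<mu> = sets (restrict_space borel {0..<(1::real)})"
  shows "(\<lambda>x. x) \<in> borel_measurable \<mu>"
  using measurable_cong_sets[OF sets refl] borel_measurable_continuous_on_restrict[OF continuous_on_id]
  by auto

lemma test_meas:
  assumes sets: "sets \<mu> = sets (restrict_space borel {0..<(1::real)})"
  shows "(\<lambda>(t,s). ennreal (if 0 \<le> s \<and> s \<le> t then 2*r/(1-s*r)^3 else 0)) \<in> borel_measurable (\<mu> \<Otimes>\<^sub>M lborel)"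
proof -
  note [measurable] = mu_id_meas[OF sets]
  show ?thesis by measurable
qed

lemma sets_Ico:
  assumes sets: "sets \<mu> = sets (restrict_space borel {0..<(1::real)})" and "0 \<le> s"
  shows "{s..<1} \<in> sets \<mu>"
  unfolding sets using assms(2) by (auto simp: sets_restrict_space_iff)

lemma ftc1:
  fixes r t :: real
  assumes r: "0 \<le> r" "r < 1" and t: "0 \<le> t" "t < 1"
  shows "(\<integral>\<^sup>+s. ennreal (2*r/(1-s*r)^3) * indicator {0..t} s \<partial>lborel) = ennreal (1/(1-t*r)^2 - 1)"
proof -
  have pos: "0 < 1 - s*r" if "s \<in> {0..t}" for s
  proof -
    have "s*r \<le> 1*r" using that r t by (intro mult_right_mono) auto
    then show ?thesis using r by auto
  qed
  have "((\<lambda>s. 2*r/(1-s*r)^3) has_integral (1/(1-t*r)^2 - 1/(1-0*r)^2)) {0..t}"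
  proof (rule fundamental_theorem_of_calculus)
    fix s assume s: "s \<in> {0..t}"
    have "((\<lambda>s. 1/(1-s*r)^2) has_real_derivative 2*r/(1-s*r)^3) (at s)"
      using pos[OF s]
      apply (auto intro!: derivative_eq_intros)
      apply (simp add: divide_simps)
      apply (simp add: algebra_simps power2_eq_square power3_eq_cube eval_nat_numeral)
      done
    then show "((\<lambda>s. 1/(1-s*r)^2) has_vector_derivative 2*r/(1-s*r)^3) (at s within {0..t})"
      by (simp add: has_real_derivative_iff_has_vector_derivative has_vector_derivative_at_within)
  qed (use t in auto)
  then have I: "((\<lambda>s. 2*r/(1-s*r)^3) has_integral (1/(1-t*r)^2 - 1)) {0..t}" by simp
  show ?thesis
    by (rule nn_integral_has_integral_lebesgue'[OF _ I]) (use pos r in \<open>auto intro!: divide_nonneg_pos\<close>)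
qed

lemma ftc2:
  fixes r C \<alpha> :: real
  assumes r: "0 \<le> r" "r < 1" and C: "0 \<le> C" and a: "\<alpha> < 2"
  shows "(\<integral>\<^sup>+s. ennreal (2*r*C*(1-s*r) powr (\<alpha>-3)) * indicator {0..1} s \<partial>lborel)
     = ennreal (2*C/(2-\<alpha>) * ((1-r) powr (\<alpha>-2) - 1))"
proof -
  have pos: "0 < 1 - s*r" if "s \<in> {0..1}" for s
  proof -
    have "s*r \<le> 1*r" using that r by (intro mult_right_mono) auto
    then show ?thesis using r by auto
  qed
  have "((\<lambda>s. 2*r*C*(1-s*r) powr (\<alpha>-3)) has_integral
      (2*C/(2-\<alpha>) * (1-1*r) powr (\<alpha>-2) - 2*C/(2-\<alpha>) * (1-0*r) powr (\<alpha>-2))) {0..1}"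
  proof (rule fundamental_theorem_of_calculus)
    fix s :: real assume s: "s \<in> {0..1}"
    have "((\<lambda>s. 2*C/(2-\<alpha>) * (1-s*r) powr (\<alpha>-2)) has_real_derivative 2*r*C*(1-s*r) powr (\<alpha>-3)) (at s)"
      using pos[OF s] a
    proof -
      have d: "DERIV (\<lambda>s. (1-s*r) powr (\<alpha>-2)) s :> (\<alpha>-2) * (1-s*r) powr (\<alpha>-2 - of_nat 1) * (-r)"
        by (rule DERIV_fun_powr) (use pos[OF s] in \<open>auto intro!: derivative_eq_intros\<close>)
      have e: "2*C/(2-\<alpha>) * ((\<alpha>-2) * (1-s*r) powr (\<alpha>-2 - of_nat 1) * (-r)) = 2*r*C*(1-s*r) powr (\<alpha>-3)"
        using a by (simp add: field_simps)
      show ?thesis using DERIV_cmult[OF d, of "2*C/(2-\<alpha>)"] unfolding e .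
    qed
    then show "((\<lambda>s. 2*C/(2-\<alpha>) * (1-s*r) powr (\<alpha>-2)) has_vector_derivative 2*r*C*(1-s*r) powr (\<alpha>-3)) (at s within {0..1})"
      by (simp add: has_real_derivative_iff_has_vector_derivative has_vector_derivative_at_within)
  qed auto
  then have I: "((\<lambda>s. 2*r*C*(1-s*r) powr (\<alpha>-3)) has_integral (2*C/(2-\<alpha>) * ((1-r) powr (\<alpha>-2) - 1))) {0..1}"
    by (simp add: algebra_simps diff_divide_distrib)
  show ?thesis
    by (rule nn_integral_has_integral_lebesgue'[OF _ I]) (use pos r C in auto)
qed

lemma carleson_nn:
  fixes \<mu> :: "real measure"
  assumes sets: "sets \<mu> = sets (restrict_space borel {0..<1})" and fin: "finite_measure \<mu>"
    and Cb: "\<And>t. t\<in>{0..<1} \<Longrightarrow> measure \<mu> {t..<1} \<le> C * (1 - t) powr \<alpha>"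
    and a: "0 < \<alpha>" "\<alpha> < 2" and r: "0 \<le> r" "r < 1"
  shows "(\<integral>\<^sup>+t. ennreal (1/(1-t*r)^2) \<partial>\<mu>) \<le> emeasure \<mu> (space \<mu>) + ennreal (2*C/(2-\<alpha>) * (1-r) powr (\<alpha>-2))"
proof -
  interpret finite_measure \<mu> by fact
  note [measurable] = mu_id_meas[OF sets]
  have sp: "space \<mu> = {0..<1}" by (rule mu_space[OF sets])
  have "measure \<mu> {0..<1} \<le> C" using Cb[of 0] by simp
  then have C0: "0 \<le> C" by (metis measure_nonneg order_trans)
  define h where "h = (\<lambda>t s. ennreal (if 0 \<le> s \<and> s \<le> t then 2*r/(1-s*r)^3 else 0))"
  have hm: "(\<lambda>(t,s). h t s) \<in> borel_measurable (\<mu> \<Otimes>\<^sub>M lborel)"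
    unfolding h_def by measurable
  have pt: "ennreal (1/(1-t*r)^2) = 1 + (\<integral>\<^sup>+s. h t s \<partial>lborel)" if t: "t \<in> space \<mu>" for t
  proof -
    have t': "0 \<le> t" "t < 1" using t sp by auto
    have "t*r \<le> 1*r" using t' r by (intro mult_right_mono) auto
    then have tr: "0 < 1 - t*r" using r by auto
    have ge: "1 \<le> 1/(1-t*r)^2"
    proof -
      have "(1-t*r)^2 \<le> 1^2" using tr t' r by (intro power_mono) (auto intro: mult_nonneg_nonneg)
      then show ?thesis using tr by (simp add: field_simps)
    qed
    have "(\<integral>\<^sup>+s. h t s \<partial>lborel) = (\<integral>\<^sup>+s. ennreal (2*r/(1-s*r)^3) * indicator {0..t} s \<partial>lborel)"
      unfolding h_def by (intro nn_integral_cong) (auto simp: indicator_def)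
    also have "\<dots> = ennreal (1/(1-t*r)^2 - 1)" by (rule ftc1) (use r t' in auto)
    moreover have "ennreal (1/(1-t*r)^2) = ennreal 1 + ennreal (1/(1-t*r)^2 - 1)"
      by (subst ennreal_plus[symmetric]) (use ge in auto)
    ultimately show ?thesis by simp
  qed
  have inner: "(\<integral>\<^sup>+t. h t s \<partial>\<mu>) \<le> ennreal (2*r*C*(1-s*r) powr (\<alpha>-3)) * indicator {0..1} s" for s
  proof (cases "0 \<le> s \<and> s < 1")
    case True
    have "s*r \<le> 1*r" using True r by (intro mult_right_mono) auto
    then have sr: "0 < 1 - s*r" using r by auto
    have "(\<integral>\<^sup>+t. h t s \<partial>\<mu>) = (\<integral>\<^sup>+t. ennreal (2*r/(1-s*r)^3) * indicator {s..<1} t \<partial>\<mu>)"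
      unfolding h_def using True by (intro nn_integral_cong) (auto simp: indicator_def sp)
    also have "\<dots> = ennreal (2*r/(1-s*r)^3) * emeasure \<mu> {s..<1}"
      by (rule nn_integral_cmult_indicator) (rule sets_Ico[OF sets], use True in auto)
    also have "\<dots> = ennreal (2*r/(1-s*r)^3 * measure \<mu> {s..<1})"
      using sr r by (simp add: emeasure_eq_measure ennreal_mult'[symmetric])
    also have "\<dots> \<le> ennreal (2*r*C*(1-s*r) powr (\<alpha>-3))"
    proof (rule ennreal_leI)
      have "2*r/(1-s*r)^3 * measure \<mu> {s..<1} \<le> 2*r/(1-s*r)^3 * (C * (1-s) powr \<alpha>)"
        using Cb[of s] True sr r by (intro mult_left_mono) auto
      also have "\<dots> \<le> 2*r/(1-s*r)^3 * (C * (1-s*r) powr \<alpha>)"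
        using True sr r C0 a
        by (intro mult_left_mono powr_mono2) (auto intro!: mult_right_le_one_le)
      also have "\<dots> = 2*r*C*(1-s*r) powr (\<alpha>-3)"
        using sr by (simp add: powr_diff powr_realpow)
      finally show "2*r/(1-s*r)^3 * measure \<mu> {s..<1} \<le> 2*r*C*(1-s*r) powr (\<alpha>-3)" .
    qed
    finally show ?thesis using True by simp
  next
    case False
    have "(\<integral>\<^sup>+t. h t s \<partial>\<mu>) = (\<integral>\<^sup>+t. 0 \<partial>\<mu>)"
      unfolding h_def using False by (intro nn_integral_cong) (auto simp: sp)
    then show ?thesis by simp
  qed
  have "(\<integral>\<^sup>+t. ennreal (1/(1-t*r)^2) \<partial>\<mu>) = (\<integral>\<^sup>+t. 1 + (\<integral>\<^sup>+s. h t s \<partial>lborel) \<partial>\<mu>)"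
    by (intro nn_integral_cong pt)
  also have "\<dots> = (\<integral>\<^sup>+t. 1 \<partial>\<mu>) + (\<integral>\<^sup>+t. (\<integral>\<^sup>+s. h t s \<partial>lborel) \<partial>\<mu>)"
  proof (rule nn_integral_add)
    show "(\<lambda>t. \<integral>\<^sup>+ s. h t s \<partial>lborel) \<in> borel_measurable \<mu>"
      using lborel.borel_measurable_nn_integral[OF hm] by simp
  qed auto
  also have "(\<integral>\<^sup>+t. (\<integral>\<^sup>+s. h t s \<partial>lborel) \<partial>\<mu>) = (\<integral>\<^sup>+s. (\<integral>\<^sup>+t. h t s \<partial>\<mu>) \<partial>lborel)"
  proof -
    interpret pair_sigma_finite \<mu> lborel by unfold_locales
    show ?thesis using Fubini'[OF hm] by simp
  qed
  also have "\<dots> \<le> (\<integral>\<^sup>+s. ennreal (2*r*C*(1-s*r) powr (\<alpha>-3)) * indicator {0..1} s \<partial>lborel)"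
    by (intro nn_integral_mono inner)
  also have "\<dots> = ennreal (2*C/(2-\<alpha>) * ((1-r) powr (\<alpha>-2) - 1))"
    by (rule ftc2) (use r C0 a in auto)
  also have "\<dots> \<le> ennreal (2*C/(2-\<alpha>) * (1-r) powr (\<alpha>-2))"
    using C0 a by (intro ennreal_leI mult_left_mono) auto
  finally show ?thesis by (simp add: add_left_mono)
qed



lemma deriv_bound:
  fixes f :: "complex \<Rightarrow> complex"
  assumes hol: "f holomorphic_on ball 0 1" and N: "\<And>w. w \<in> ball 0 1 \<Longrightarrow> norm (f w) \<le> N"
    and w: "w \<in> ball 0 1"
  shows "norm (deriv f w) \<le> 2 * N / (1 - norm w)"
proof -
  define \<rho> where "\<rho> = (1 - norm w) / 2"
  have \<rho>: "0 < \<rho>" using w by (simp add: \<rho>_def)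
  have sub: "cball w \<rho> \<subseteq> ball 0 1"
  proof
    fix x assume "x \<in> cball w \<rho>"
    then have "norm (x - w) \<le> \<rho>" by (simp add: dist_norm norm_minus_commute)
    then have "norm x \<le> norm w + \<rho>" by (metis add.commute diff_le_eq norm_triangle_ineq2 order_trans)
    moreover have "norm w + \<rho> < 1" using w by (simp add: \<rho>_def field_simps)
    ultimately show "x \<in> ball 0 1" by simp
  qed
  have "norm ((deriv ^^ 1) f w) \<le> (fact 1) * N / \<rho>^1"
  proof (rule Cauchy_inequality)
    show "f holomorphic_on ball w \<rho>" using hol sub ball_subset_cball by (meson holomorphic_on_subset order_trans)
    show "continuous_on (cball w \<rho>) f" using hol sub by (meson continuous_on_subset holomorphic_on_imp_continuous_on)
    show "norm (f x) \<le> N" if "norm (w - x) = \<rho>" for x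
      using that sub N by (simp add: subset_iff dist_norm)
  qed (use \<rho> in auto)
  then show ?thesis by (simp add: \<rho>_def mult.commute)
qed

lemma phi_deriv:
  fixes f :: "complex \<Rightarrow> complex" and t :: real
  assumes hol: "f holomorphic_on ball 0 1" and t: "0 \<le> t" "t \<le> 1" and u: "u \<in> ball 0 1"
  shows "((\<lambda>u. f (complex_of_real t * u) / (1 - complex_of_real t * u)) has_field_derivative
     (of_real t * deriv f (of_real t * u) / (1 - of_real t * u) + of_real t * f (of_real t * u) / (1 - of_real t * u)^2)) (at u)"
proof -
  have nu: "norm (of_real t * u) < 1"
  proof -
    have "norm (of_real t * u) = t * norm u" using t by (simp add: norm_mult)
    also have "\<dots> \<le> norm u" using t by (simp add: mult_left_le_one_le)
    finally show ?thesis using u by simp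
  qed
  have nz: "1 - of_real t * u \<noteq> 0" using nu by auto
  have fd: "(f has_field_derivative deriv f (of_real t * u)) (at (of_real t * u))"
    using hol nu by (intro holomorphic_derivI[of f "ball 0 1"]) auto
  have gd: "((\<lambda>u. f (of_real t * u)) has_field_derivative deriv f (of_real t * u) * of_real t) (at u)"
    by (rule DERIV_chain2[where g="\<lambda>u. of_real t * u", OF fd]) (auto intro!: derivative_eq_intros)
  show ?thesis
  proof -
    have dd: "((\<lambda>u. 1 - of_real t*u) has_field_derivative - of_real t) (at u)"
      by (auto intro!: derivative_eq_intros)
    have gen: "\<And>a D c F::complex. a \<noteq> 0 \<Longrightarrow> (D*c*a - F*(-c))/(a*a) = c*D/a + c*F/a^2"
      by (simp add: field_simps power2_eq_square)
    from DERIV_divide[OF gd dd nz] show ?thesis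
      by (rule DERIV_cong) (rule gen[OF nz])
  qed
qed

lemma phi'_bound:
  fixes f :: "complex \<Rightarrow> complex" and t :: real
  assumes hol: "f holomorphic_on ball 0 1" and N: "\<And>w. w \<in> ball 0 1 \<Longrightarrow> norm (f w) \<le> N"
    and t: "0 \<le> t" "t \<le> 1" and u: "u \<in> ball 0 1"
  shows "norm (of_real t * deriv f (of_real t * u) / (1 - of_real t * u) + of_real t * f (of_real t * u) / (1 - of_real t * u)^2)
         \<le> 3 * N / (1 - t * norm u)^2"
proof -
  have ntu: "norm (of_real t * u) = t * norm u" using t by (simp add: norm_mult)
  have "t * norm u \<le> norm u" using t by (simp add: mult_left_le_one_le)
  then have d: "0 < 1 - t * norm u" using u by simp
  define d where "d = 1 - t * norm u"
  have dpos: "0 < d" using \<open>0 < 1 - t * norm u\<close> by (simp add: d_def)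
  have tu: "of_real t * u \<in> ball 0 1" using ntu dpos by (simp add: d_def)
  have D: "d \<le> norm (1 - of_real t * u)"
    using norm_triangle_ineq2[of 1 "of_real t * u"] ntu by (simp add: d_def)
  have N0: "0 \<le> N" using N[of 0] by (meson centre_in_ball norm_ge_zero order_trans zero_less_one)
  have fd: "norm (deriv f (of_real t * u)) \<le> 2 * N / d"
    using deriv_bound[OF hol N tu] ntu by (simp add: d_def)
  have ff: "norm (f (of_real t * u)) \<le> N" using N tu by blast
  have t1: "norm (of_real t * deriv f (of_real t * u) / (1 - of_real t * u)) \<le> (2 * N / d) / d"
  proof -
    have "norm (of_real t * deriv f (of_real t * u) / (1 - of_real t * u)) = t * norm (deriv f (of_real t * u)) / norm (1 - of_real t * u)"
      using t by (simp add: norm_mult norm_divide)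
    also have "\<dots> \<le> (2 * N / d) / d"
    proof (rule frac_le)
      show "t * norm (deriv f (of_real t * u)) \<le> 2 * N / d"
        using fd t by (meson mult_left_le_one_le norm_ge_zero order_trans)
    qed (use D dpos N0 in auto)
    finally show ?thesis .
  qed
  have t2: "norm (of_real t * f (of_real t * u) / (1 - of_real t * u)^2) \<le> N / d^2"
  proof -
    have "norm (of_real t * f (of_real t * u) / (1 - of_real t * u)^2) = t * norm (f (of_real t * u)) / norm (1 - of_real t * u)^2"
      using t by (simp add: norm_mult norm_divide norm_power)
    also have "\<dots> \<le> N / d^2"
    proof (rule frac_le)
      show "t * norm (f (of_real t * u)) \<le> N"
        using ff t by (meson mult_left_le_one_le norm_ge_zero order_trans)
      show "d^2 \<le> norm (1 - of_real t * u)^2" using D dpos by (intro power_mono) auto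
    qed (use D dpos N0 in auto)
    finally show ?thesis .
  qed
  have "norm (of_real t * deriv f (of_real t * u) / (1 - of_real t * u) + of_real t * f (of_real t * u) / (1 - of_real t * u)^2)
      \<le> (2 * N / d) / d + N / d^2"
    using norm_triangle_ineq[of "of_real t * deriv f (of_real t * u) / (1 - of_real t * u)" "of_real t * f (of_real t * u) / (1 - of_real t * u)^2"] t1 t2
    by linarith
  also have "\<dots> = 3 * N / d^2" using dpos by (simp add: field_simps power2_eq_square)
  finally show ?thesis by (simp add: d_def)
qed



lemma mu_cont_meas:
  assumes sets: "sets \<mu> = sets (restrict_space borel {0..<(1::real)})"
    and c: "continuous_on {0..<1} g"
  shows "(g :: real \<Rightarrow> 'b::topological_space) \<in> borel_measurable \<mu>"
  using measurable_cong_sets[OF sets refl] borel_measurable_continuous_on_restrict[OF c]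
  by auto

lemma tw_ball:
  fixes t :: real
  assumes "0 \<le> t" "t \<le> 1" "w \<in> ball 0 (1::real)"
  shows "norm (complex_of_real t * z) \<le> norm z"
  using assms by (simp add: norm_mult mult_left_le_one_le)

lemma phi_cont:
  fixes f :: "complex \<Rightarrow> complex"
  assumes hol: "f holomorphic_on ball 0 1" and w: "w \<in> ball 0 1"
  shows "continuous_on {0..<1} (\<lambda>t. f (complex_of_real t * w) / (1 - complex_of_real t * w))"
proof -
  have inb: "complex_of_real t * w \<in> ball 0 1" if "t \<in> {0..<1}" for t
    using that w by (simp add: norm_mult) (meson le_less_trans mult_left_le_one_le norm_ge_zero less_imp_le)
  have "continuous_on {0..<1} (\<lambda>t. f (complex_of_real t * w))"
    by (rule continuous_on_compose2[OF holomorphic_on_imp_continuous_on[OF hol]])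
       (use inb in \<open>auto intro!: continuous_intros\<close>)
  moreover have "1 - complex_of_real t * w \<noteq> 0" if "t \<in> {0..<1}" for t
    using inb[OF that] by auto
  ultimately show ?thesis by (auto intro!: continuous_intros)
qed

lemma phi'_cont:
  fixes f :: "complex \<Rightarrow> complex"
  assumes hol: "f holomorphic_on ball 0 1" and w: "w \<in> ball 0 1"
  shows "continuous_on {0..<1} (\<lambda>t. of_real t * deriv f (of_real t * w) / (1 - of_real t * w) + of_real t * f (of_real t * w) / (1 - of_real t * w)^2)"
proof -
  have inb: "complex_of_real t * w \<in> ball 0 1" if "t \<in> {0..<1}" for t
    using that w by (simp add: norm_mult) (meson le_less_trans mult_left_le_one_le norm_ge_zero less_imp_le)
  have "continuous_on {0..<1} (\<lambda>t. f (complex_of_real t * w))"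
    by (rule continuous_on_compose2[OF holomorphic_on_imp_continuous_on[OF hol]])
       (use inb in \<open>auto intro!: continuous_intros\<close>)
  moreover have "continuous_on {0..<1} (\<lambda>t. deriv f (complex_of_real t * w))"
    by (rule continuous_on_compose2[OF holomorphic_on_imp_continuous_on[OF holomorphic_deriv[OF hol]]])
       (use inb in \<open>auto intro!: continuous_intros\<close>)
  moreover have "1 - complex_of_real t * w \<noteq> 0" if "t \<in> {0..<1}" for t
    using inb[OF that] by auto
  ultimately show ?thesis by (auto intro!: continuous_intros)
qed

lemma phi_bound:
  fixes f :: "complex \<Rightarrow> complex" and t :: real
  assumes N: "\<And>w. w \<in> ball 0 1 \<Longrightarrow> norm (f w) \<le> N"
    and t: "0 \<le> t" "t \<le> 1" and w: "w \<in> ball 0 1"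
  shows "norm (f (complex_of_real t * w) / (1 - complex_of_real t * w)) \<le> N / (1 - norm w)"
proof -
  have ntu: "norm (of_real t * w) = t * norm w" using t by (simp add: norm_mult)
  have "t * norm w \<le> norm w" using t by (simp add: mult_left_le_one_le)
  then have D: "1 - norm w \<le> norm (1 - of_real t * w)"
    using norm_triangle_ineq2[of 1 "of_real t * w"] ntu by simp
  have tu: "of_real t * w \<in> ball 0 1" using ntu \<open>t * norm w \<le> norm w\<close> w by simp
  have N0: "0 \<le> N" using N[of 0] by (meson centre_in_ball norm_ge_zero order_trans zero_less_one)
  show ?thesis unfolding norm_divide
    by (rule frac_le) (use N[OF tu] N0 D w in auto)
qed

lemma F_deriv:
  fixes f :: "complex \<Rightarrow> complex" and \<mu> :: "real measure"
  assumes sets: "sets \<mu> = sets (restrict_space borel {0..<1})" and fin: "finite_measure \<mu>"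
    and hol: "f holomorphic_on ball 0 1" and N: "\<And>w. w \<in> ball 0 1 \<Longrightarrow> norm (f w) \<le> N"
    and z: "z \<in> ball 0 1"
  shows "((\<lambda>z. LINT t|\<mu>. f (complex_of_real t * z) / (1 - complex_of_real t * z)) has_field_derivative
      (LINT t|\<mu>. of_real t * deriv f (of_real t * z) / (1 - of_real t * z) + of_real t * f (of_real t * z) / (1 - of_real t * z)^2)) (at z)"
proof -
  interpret finite_measure \<mu> by fact
  have sp: "space \<mu> = {0..<1}" by (rule mu_space[OF sets])
  define \<phi> where "\<phi> = (\<lambda>t w. f (complex_of_real t * w) / (1 - complex_of_real t * w))"
  define \<phi>' where "\<phi>' = (\<lambda>t w. of_real t * deriv f (of_real t * w) / (1 - of_real t * w) + of_real t * f (of_real t * w) / (1 - of_real t * w)^2)"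
  have N0: "0 \<le> N" using N[of 0] by (meson centre_in_ball norm_ge_zero order_trans zero_less_one)
  have \<phi>m: "(\<lambda>t. \<phi> t w) \<in> borel_measurable \<mu>" if "w \<in> ball 0 1" for w
    unfolding \<phi>_def by (rule mu_cont_meas[OF sets phi_cont[OF hol that]])
  have \<phi>'m: "(\<lambda>t. \<phi>' t w) \<in> borel_measurable \<mu>" if "w \<in> ball 0 1" for w
    unfolding \<phi>'_def by (rule mu_cont_meas[OF sets phi'_cont[OF hol that]])
  have \<phi>i: "integrable \<mu> (\<lambda>t. \<phi> t w)" if w: "w \<in> ball 0 1" for w
  proof (rule integrable_const_bound[where B="N / (1 - norm w)"])
    show "AE t in \<mu>. norm (\<phi> t w) \<le> N / (1 - norm w)"
      using phi_bound[of f N, OF N _ _ w] by (intro AE_I2) (auto simp: sp \<phi>_def)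
  qed (rule \<phi>m[OF w])
  define \<rho> where "\<rho> = (1 + norm z) / 2"
  have \<rho>: "norm z < \<rho>" "\<rho> < 1" using z by (auto simp: \<rho>_def)
  have z\<rho>: "z \<in> ball 0 \<rho>" using \<rho> by simp
  have b\<rho>: "ball 0 \<rho> \<subseteq> ball (0::complex) 1" using \<rho> by auto
  define B where "B = 3 * N / (1 - \<rho>)^2"
  have \<phi>d: "(\<phi> t has_field_derivative \<phi>' t u) (at u)" if "t \<in> {0..<1}" "u \<in> ball 0 1" for t u
    unfolding \<phi>_def \<phi>'_def by (rule phi_deriv[OF hol]) (use that in auto)
  have \<phi>'b: "norm (\<phi>' t u) \<le> B" if t: "t \<in> {0..<1}" and u: "u \<in> ball 0 \<rho>" for t u
  proof -
    have "norm (\<phi>' t u) \<le> 3 * N / (1 - t * norm u)^2"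
      unfolding \<phi>'_def by (rule phi'_bound[of f N, OF hol N]) (use t u b\<rho> in auto)
    also have "\<dots> \<le> B" unfolding B_def
    proof (rule divide_left_mono)
      have "t * norm u \<le> norm u" using t by (simp add: mult_left_le_one_le)
      then have tu: "t * norm u < \<rho>" using u by simp
      then have "0 < (1 - t * norm u)^2 * (1 - \<rho>)^2" using \<rho> by (intro mult_pos_pos) auto
      then show "0 < (1 - t * norm u)^2 * (1 - \<rho>)^2" .
      show "(1 - \<rho>)^2 \<le> (1 - t * norm u)^2" using \<rho> tu by (intro power_mono) auto
    qed (use N0 \<rho> in auto)
    finally show ?thesis .
  qed
  have Qb: "norm ((\<phi> t x - \<phi> t z) / (x - z)) \<le> B" if t: "t \<in> {0..<1}" and x: "x \<in> ball 0 \<rho>" "x \<noteq> z" for t x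
  proof -
    have "norm (\<phi> t x - \<phi> t z) \<le> B * norm (x - z)"
    proof (rule field_differentiable_bound[of "ball (0::complex) \<rho>"])
      fix u :: complex assume "u \<in> ball 0 \<rho>"
      then have "u \<in> ball 0 1" using b\<rho> by blast
      then show "(\<phi> t has_field_derivative \<phi>' t u) (at u within ball 0 \<rho>)"
        by (rule has_field_derivative_at_within[OF \<phi>d[OF t]])
    qed (use \<phi>'b[OF t] x z\<rho> in auto)
    then show ?thesis using x by (simp add: norm_divide divide_le_eq)
  qed
  have "((\<lambda>w. LINT t|\<mu>. \<phi> t w) has_field_derivative (LINT t|\<mu>. \<phi>' t z)) (at z)"
    unfolding has_field_derivative_iff tendsto_at_iff_sequentially
  proof (intro allI impI)
    fix X :: "nat \<Rightarrow> complex" assume X: "\<forall>i. X i \<in> UNIV - {z}" "X \<longlonglongrightarrow> z"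
    have "\<forall>\<^sub>F i in sequentially. X i \<in> ball 0 \<rho>"
      by (rule topological_tendstoD[OF X(2)]) (use z\<rho> in auto)
    then obtain M0 where M0: "\<And>i. i \<ge> M0 \<Longrightarrow> X i \<in> ball 0 \<rho>" by (auto simp: eventually_sequentially)
    define Y where "Y = (\<lambda>i. X (i + M0))"
    have Y: "Y i \<in> ball 0 \<rho>" "Y i \<noteq> z" for i using M0 X(1) by (auto simp: Y_def)
    have Yl: "Y \<longlonglongrightarrow> z" unfolding Y_def by (rule LIMSEQ_ignore_initial_segment[OF X(2)])
    have eq: "(integral\<^sup>L \<mu> (\<lambda>t. \<phi> t (Y i)) - integral\<^sup>L \<mu> (\<lambda>t. \<phi> t z)) / (Y i - z)
        = integral\<^sup>L \<mu> (\<lambda>t. (\<phi> t (Y i) - \<phi> t z) / (Y i - z))" for i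
      using \<phi>i[of "Y i"] \<phi>i[OF z] Y[of i] b\<rho> by auto
    have "(\<lambda>i. integral\<^sup>L \<mu> (\<lambda>t. (\<phi> t (Y i) - \<phi> t z) / (Y i - z))) \<longlonglongrightarrow> integral\<^sup>L \<mu> (\<lambda>t. \<phi>' t z)"
    proof (rule integral_dominated_convergence[where w="\<lambda>_. B"])
      show "(\<lambda>t. \<phi>' t z) \<in> borel_measurable \<mu>" by (rule \<phi>'m[OF z])
      show "(\<lambda>t. (\<phi> t (Y i) - \<phi> t z) / (Y i - z)) \<in> borel_measurable \<mu>" for i
        using \<phi>m[of "Y i"] \<phi>m[OF z] Y[of i] b\<rho> by auto
      show "integrable \<mu> (\<lambda>_. B)" by simp
      show "AE t in \<mu>. (\<lambda>i. (\<phi> t (Y i) - \<phi> t z) / (Y i - z)) \<longlonglongrightarrow> \<phi>' t z"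
      proof (rule AE_I2)
        fix t assume t: "t \<in> space \<mu>"
        have "((\<lambda>y. (\<phi> t y - \<phi> t z) / (y - z)) \<longlongrightarrow> \<phi>' t z) (at z)"
          using \<phi>d[of t z] t z by (simp add: sp has_field_derivative_iff)
        then show "(\<lambda>i. (\<phi> t (Y i) - \<phi> t z) / (Y i - z)) \<longlonglongrightarrow> \<phi>' t z"
          unfolding tendsto_at_iff_sequentially comp_def using Y Yl by auto
      qed
      show "AE t in \<mu>. norm ((\<phi> t (Y i) - \<phi> t z) / (Y i - z)) \<le> B" for i
        using Qb Y[of i] by (intro AE_I2) (auto simp: sp)
    qed
    then have "(\<lambda>i. (integral\<^sup>L \<mu> (\<lambda>t. \<phi> t (Y i)) - integral\<^sup>L \<mu> (\<lambda>t. \<phi> t z)) / (Y i - z)) \<longlonglongrightarrow> integral\<^sup>L \<mu> (\<lambda>t. \<phi>' t z)"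
      by (simp only: eq)
    then show "((\<lambda>y. (integral\<^sup>L \<mu> (\<lambda>t. \<phi> t y) - integral\<^sup>L \<mu> (\<lambda>t. \<phi> t z)) / (y - z)) \<circ> X) \<longlonglongrightarrow> integral\<^sup>L \<mu> (\<lambda>t. \<phi>' t z)"
      unfolding comp_def Y_def by (rule LIMSEQ_offset)
  qed
  then show ?thesis by (simp add: \<phi>_def \<phi>'_def)
qed



lemma carleson_real:
  fixes \<mu> :: "real measure"
  assumes sets: "sets \<mu> = sets (restrict_space borel {0..<1})" and fin: "finite_measure \<mu>"
    and Cb: "\<And>t. t\<in>{0..<1} \<Longrightarrow> measure \<mu> {t..<1} \<le> C * (1 - t) powr \<alpha>"
    and a: "0 < \<alpha>" "\<alpha> < 2" and r: "0 \<le> r" "r < 1"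
  shows "integrable \<mu> (\<lambda>t. 1/(1-t*r)^2)"
    and "integral\<^sup>L \<mu> (\<lambda>t. 1/(1-t*r)^2) \<le> (measure \<mu> (space \<mu>) + 2*C/(2-\<alpha>)) * (1-r) powr (\<alpha>-2)"
proof -
  interpret finite_measure \<mu> by fact
  note [measurable] = mu_id_meas[OF sets]
  have sp: "space \<mu> = {0..<1}" by (rule mu_space[OF sets])
  have "measure \<mu> {0..<1} \<le> C" using Cb[of 0] by simp
  then have C0: "0 \<le> C" by (metis measure_nonneg order_trans)
  have bnd: "norm (1/(1-t*r)^2) \<le> 1/(1-r)^2" if "t \<in> space \<mu>" for t
  proof -
    have t: "0 \<le> t" "t < 1" using that sp by auto
    have "t*r \<le> 1*r" using t r by (intro mult_right_mono) auto
    then have "1 - r \<le> 1 - t*r" by simp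
    moreover have "0 < 1 - r" using r by simp
    ultimately have "(1-r)^2 \<le> (1-t*r)^2" by (intro power_mono) auto
    then show ?thesis using \<open>0 < 1 - r\<close> by (simp add: frac_le)
  qed
  show int: "integrable \<mu> (\<lambda>t. 1/(1-t*r)^2)"
    by (rule integrable_const_bound[where B="1/(1-r)^2"]) (use bnd in \<open>auto intro!: AE_I2\<close>)
  have nn: "(\<integral>\<^sup>+t. ennreal (1/(1-t*r)^2) \<partial>\<mu>) = ennreal (integral\<^sup>L \<mu> (\<lambda>t. 1/(1-t*r)^2))"
    by (rule nn_integral_eq_integral[OF int]) auto
  have X0: "0 \<le> 2*C/(2-\<alpha>) * (1-r) powr (\<alpha>-2)" using C0 a by auto
  have "ennreal (integral\<^sup>L \<mu> (\<lambda>t. 1/(1-t*r)^2)) \<le> ennreal (measure \<mu> (space \<mu>)) + ennreal (2*C/(2-\<alpha>) * (1-r) powr (\<alpha>-2))"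
    using carleson_nn[OF sets fin Cb a r] nn by (simp add: emeasure_eq_measure)
  also have "\<dots> = ennreal (measure \<mu> (space \<mu>) + 2*C/(2-\<alpha>) * (1-r) powr (\<alpha>-2))"
    using X0 by (simp add: ennreal_plus)
  finally have "integral\<^sup>L \<mu> (\<lambda>t. 1/(1-t*r)^2) \<le> measure \<mu> (space \<mu>) + 2*C/(2-\<alpha>) * (1-r) powr (\<alpha>-2)"
    using X0 by (subst (asm) ennreal_le_iff) auto
  also have "\<dots> \<le> measure \<mu> (space \<mu>) * (1-r) powr (\<alpha>-2) + 2*C/(2-\<alpha>) * (1-r) powr (\<alpha>-2)"
  proof -
    have "1 powr (\<alpha>-2) \<le> (1-r) powr (\<alpha>-2)" using a r by (intro powr_mono2') auto
    then have "measure \<mu> (space \<mu>) * 1 \<le> measure \<mu> (space \<mu>) * (1-r) powr (\<alpha>-2)"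
      by (intro mult_left_mono) auto
    then show ?thesis by simp
  qed
  finally show "integral\<^sup>L \<mu> (\<lambda>t. 1/(1-t*r)^2) \<le> (measure \<mu> (space \<mu>) + 2*C/(2-\<alpha>)) * (1-r) powr (\<alpha>-2)"
    by (simp add: algebra_simps)
qed

theorem mainTheorem8:
  fixes \<alpha> :: real and \<mu> :: "real measure"
  assumes "0 < \<alpha>" and "\<alpha> \<le> 1/2"
    and "borel_measure_on_01 \<mu>"
    and "carleson_measure \<alpha> \<mu>"
  shows "\<exists>K. \<forall>f\<in>Hinf. cesaro_op \<mu> f \<in> Bloch_type (2 - \<alpha>) \<and>
            Bloch_type_norm (2 - \<alpha>) (cesaro_op \<mu> f) \<le> K * Hinf_norm f"
proof -
  have sets: "sets \<mu> = sets (restrict_space borel {0..<1})" and fin: "finite_measure \<mu>"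
    using assms(3) by (auto simp: borel_measure_on_01_def)
  obtain C where Cb: "\<And>t. t\<in>{0..<1} \<Longrightarrow> measure \<mu> {t..<1} \<le> C * (1 - t) powr \<alpha>"
    using assms(4) unfolding carleson_measure_def by blast
  interpret finite_measure \<mu> by fact
  have sp: "space \<mu> = {0..<1}" by (rule mu_space[OF sets])
  have a: "0 < \<alpha>" "\<alpha> < 2" using assms(1,2) by auto
  define Mt where "Mt = measure \<mu> (space \<mu>)"
  define K0 where "K0 = Mt + 2*C/(2-\<alpha>)"
  have Mt0: "0 \<le> Mt" by (simp add: Mt_def)
  have CR: "integral\<^sup>L \<mu> (\<lambda>t. 1/(1-t*r)^2) \<le> K0 * (1-r) powr (\<alpha>-2)"
       "integrable \<mu> (\<lambda>t. 1/(1-t*r)^2)" if "0 \<le> r" "r < 1" for r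
    using carleson_real[OF sets fin Cb a that] by (auto simp: K0_def Mt_def)
  have K00: "0 \<le> K0"
  proof -
    have "0 \<le> integral\<^sup>L \<mu> (\<lambda>t. 1/(1-t*0)^2)" by simp
    then have "0 \<le> K0 * (1-0) powr (\<alpha>-2)" using CR(1)[of 0] by linarith
    then show ?thesis by simp
  qed
  show ?thesis
  proof (intro exI ballI conjI)
    fix f assume f: "f \<in> Hinf"
    have hol: "f holomorphic_on ball 0 1" and bd: "bounded (f ` ball 0 1)" using f by (auto simp: Hinf_def)
    define N where "N = Hinf_norm f"
    have bda: "bdd_above ((\<lambda>z. norm (f z)) ` ball 0 1)"
    proof -
      obtain B where "\<forall>x\<in>f ` ball 0 1. norm x \<le> B" using bd by (auto simp: bounded_iff)
      then show ?thesis by (intro bdd_aboveI2[where M=B]) auto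
    qed
    have Nb: "norm (f w) \<le> N" if "w \<in> ball 0 1" for w
      unfolding N_def Hinf_norm_def by (rule cSUP_upper[OF that bda])
    have N0: "0 \<le> N" using Nb[of 0] by (meson centre_in_ball norm_ge_zero order_trans zero_less_one)
    define D where "D = (\<lambda>z. LINT t|\<mu>. of_real t * deriv f (of_real t * z) / (1 - of_real t * z) + of_real t * f (of_real t * z) / (1 - of_real t * z)^2)"
    have Fd: "(cesaro_op \<mu> f has_field_derivative D z) (at z)" if "z \<in> ball 0 1" for z
      using F_deriv[of \<mu> f N z, OF sets fin hol Nb that] by (simp add: cesaro_op_def[abs_def] D_def)
    have Fhol: "cesaro_op \<mu> f holomorphic_on ball 0 1"
      using Fd by (auto simp: holomorphic_on_open intro!: exI)
    have Dz: "deriv (cesaro_op \<mu> f) z = D z" if "z \<in> ball 0 1" for z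
      by (rule DERIV_imp_deriv[OF Fd[OF that]])
    have Db: "norm (D z) \<le> 3 * N * K0 * (1 - norm z) powr (\<alpha>-2)" if z: "z \<in> ball 0 1" for z
    proof -
      define \<phi>' where "\<phi>' = (\<lambda>t. of_real t * deriv f (of_real t * z) / (1 - of_real t * z) + of_real t * f (of_real t * z) / (1 - of_real t * z)^2)"
      have r: "0 \<le> norm z" "norm z < 1" using z by auto
      have pb: "norm (\<phi>' t) \<le> 3 * N * (1/(1 - t * norm z)^2)" if "t \<in> space \<mu>" for t
        using phi'_bound[of f N, OF hol Nb _ _ z] that sp by (auto simp: \<phi>'_def)
      have pb2: "norm (\<phi>' t) \<le> 3 * N / (1 - norm z)^2" if "t \<in> space \<mu>" for t
      proof -
        have t: "0 \<le> t" "t < 1" using that sp by auto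
        have "t * norm z \<le> norm z" using t by (simp add: mult_left_le_one_le)
        then have "(1 - norm z)^2 \<le> (1 - t * norm z)^2" using r by (intro power_mono) auto
        then have "3 * N / (1 - t * norm z)^2 \<le> 3 * N / (1 - norm z)^2"
          using N0 r \<open>t * norm z \<le> norm z\<close> by (intro divide_left_mono mult_pos_pos) auto
        then have "3 * N * (1/(1 - t * norm z)^2) \<le> 3 * N / (1 - norm z)^2" by simp
        then show ?thesis using pb[OF that] by linarith
      qed
      have pm: "\<phi>' \<in> borel_measurable \<mu>"
        unfolding \<phi>'_def by (rule mu_cont_meas[OF sets phi'_cont[OF hol z]])
      have pi: "integrable \<mu> (\<lambda>t. norm (\<phi>' t))"
        by (rule integrable_const_bound[where B="3 * N / (1 - norm z)^2"]) (use pb2 pm in \<open>auto intro!: AE_I2\<close>)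
      have "norm (D z) \<le> integral\<^sup>L \<mu> (\<lambda>t. norm (\<phi>' t))"
        unfolding D_def \<phi>'_def[symmetric] by (rule integral_norm_bound)
      also have "\<dots> \<le> integral\<^sup>L \<mu> (\<lambda>t. 3 * N * (1/(1 - t * norm z)^2))"
      proof (rule integral_mono[OF pi])
        show "integrable \<mu> (\<lambda>t. 3 * N * (1/(1 - t * norm z)^2))"
          by (rule integrable_mult_right) (rule CR(2)[OF r])
      qed (use pb in auto)
      also have "\<dots> = 3 * N * integral\<^sup>L \<mu> (\<lambda>t. 1/(1 - t * norm z)^2)" by (rule integral_mult_right_zero)
      also have "\<dots> \<le> 3 * N * (K0 * (1 - norm z) powr (\<alpha>-2))"
        using CR(1)[OF r] N0 by (intro mult_left_mono) auto
      finally show ?thesis by (simp add: algebra_simps)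
    qed
    have Wb: "(1 - norm z ^ 2) powr (2 - \<alpha>) * norm (deriv (cesaro_op \<mu> f) z) \<le> 12 * N * K0"
      if z: "z \<in> ball 0 1" for z
    proof -
      have r: "0 \<le> norm z" "norm z < 1" using z by auto
      have w1: "(1 - norm z ^ 2) powr (2 - \<alpha>) \<le> 4 * (1 - norm z) powr (2 - \<alpha>)"
      proof -
        have "1 - norm z ^ 2 = (1 - norm z) * (1 + norm z)" by (simp add: power2_eq_square algebra_simps)
        also have "\<dots> \<le> (1 - norm z) * 2" using r by (intro mult_left_mono) auto
        finally have "1 - norm z ^ 2 \<le> 2 * (1 - norm z)" by simp
        moreover have "0 \<le> 1 - norm z ^ 2" using r by (simp add: abs_square_le_1 less_imp_le)
        ultimately have "(1 - norm z ^ 2) powr (2 - \<alpha>) \<le> (2 * (1 - norm z)) powr (2 - \<alpha>)"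
          using a by (intro powr_mono2) auto
        also have "\<dots> = 2 powr (2 - \<alpha>) * (1 - norm z) powr (2 - \<alpha>)" using r by (subst powr_mult) auto
        also have "\<dots> \<le> 4 * (1 - norm z) powr (2 - \<alpha>)"
        proof (rule mult_right_mono)
          have "2 powr (2 - \<alpha>) \<le> (2::real) powr 2" using a by (intro powr_mono) auto
          then show "2 powr (2 - \<alpha>) \<le> (4::real)" by simp
        qed auto
        finally show ?thesis .
      qed
      have "(1 - norm z ^ 2) powr (2 - \<alpha>) * norm (deriv (cesaro_op \<mu> f) z)
          \<le> (4 * (1 - norm z) powr (2 - \<alpha>)) * (3 * N * K0 * (1 - norm z) powr (\<alpha>-2))"
        using Dz[OF z] Db[OF z] w1 by (intro mult_mono) auto
      also have "\<dots> = 12 * N * K0 * ((1 - norm z) powr (2 - \<alpha>) * (1 - norm z) powr (\<alpha>-2))"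
        by (simp add: algebra_simps)
      also have "(1 - norm z) powr (2 - \<alpha>) * (1 - norm z) powr (\<alpha>-2) = 1"
        using r by (simp add: powr_add[symmetric])
      finally show ?thesis by simp
    qed
    show "cesaro_op \<mu> f \<in> Bloch_type (2 - \<alpha>)"
      unfolding Bloch_type_def using Fhol Wb by (auto intro!: bdd_aboveI2[where M="12 * N * K0"])
    have F0: "norm (cesaro_op \<mu> f 0) \<le> Mt * N"
    proof -
      have "cesaro_op \<mu> f 0 = (LINT t|\<mu>. f 0)" by (simp add: cesaro_op_def)
      also have "\<dots> = Mt *\<^sub>R f 0" by (simp add: Mt_def)
      finally show ?thesis using Nb[of 0] Mt0 by (simp add: mult_left_mono)
    qed
    have S: "(SUP z\<in>ball 0 1. (1 - norm z ^ 2) powr (2 - \<alpha>) * norm (deriv (cesaro_op \<mu> f) z)) \<le> 12 * N * K0"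
      by (rule cSUP_least) (use Wb in auto)
    show "Bloch_type_norm (2 - \<alpha>) (cesaro_op \<mu> f) \<le> (Mt + 12 * K0) * Hinf_norm f"
      unfolding Bloch_type_norm_def N_def[symmetric] using F0 S by (simp add: algebra_simps)
  qed
qed


end
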